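(* Assume $\beta<\infty$. The following hold. - (a) $1\le\sqrt{n}\,\beta$. - (b) $n\,\mathbb{E}|L_1|^q\le\beta^{q-2}$ for every $2\le q\le3$. - (c) If $\gamma<\infty$, then $|\kappa_s|\le\sqrt{\gamma_s}\le\sqrt{\gamma}$ for $s=1,\dots,k$. - (d) Let $3/2<\alpha<2$, put $\delta=(2-\alpha)/(\alpha-1)$, and let $s$ be an integer with $1\le s<\min(\delta^{-1},k)$. Then $|\kappa_s|\le\beta^{\delta s}+\gamma_s^{(\alpha)}\le\beta^{\delta s}+\gamma^{(\alpha)}$.
   Context: **Setting.** Let $k\ge1$ and $n\ge1$ be integers. Let $X,X_1,\dots,X_n$ be i.i.d. random variables. Let $l$ be a real Borel function. For $p=1,\dots,k$, let $t_p$ be a real Borel function of $p$ variables that is invariant under permutations of its arguments. Put $L_i=l(X_i)$. For $A=\{j_1,\dots,j_p\}\subset\{1,\dots,n\}$ with $|A|=p$, put $T_A=t_p(X_{j_1},\dots,X_{j_p})$, and write $T_{1\dots p}=T_{\{1,\dots,p\}}$. Define $\mathbb{T}=\sum_{p=1}^k\sum_{|A|=p}T_A$. **Standing assumptions.** - $\mathbb{E}L_1=0$ and $n\,\mathbb{E}L_1^2=1$. - Each $t_p(X_1,\dots,X_p)$ is integrable and degenerate: $\mathbb{E}[t_p(X_1,\dots,X_p)\mid X_2,\dots,X_p]=0$ a.s. For $p=1$ this means $\mathbb{E}t_1(X_1)=0$. **Notation.** - $\beta=n\,\mathbb{E}|L_1|^3$. - $\gamma_s=\binom{n}{s}\mathbb{E}T_{1\dots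 s}^2$ and $\gamma=\operatorname{var}\mathbb{T}=\sum_{s=1}^k\gamma_s$. - $\gamma_s^{(\alpha)}=\binom{n}{s}\mathbb{E}|T_{1\dots s}|^\alpha$ and $\gamma^{(\alpha)}=\sum_{s=1}^k\gamma_s^{(\alpha)}$. - $\kappa_s=\binom{n}{s}\mathbb{E}[L_1\cdots L_s\,\mathbb{T}]=\binom{n}{s}\mathbb{E}[L_1\cdots L_sT_{1\dots s}]$. *)

theory Defs
  imports "HOL-Probability.Probability"
begin

text \<open>Product law of p i.i.d. copies of a random element with law mu, indexed by {..<p}
  (coordinate j corresponds to X_(j+1)).\<close>
definition prodlaw :: "'b measure \<Rightarrow> nat \<Rightarrow> (nat \<Rightarrow> 'b) measure" where
  "prodlaw \<mu> p = PiM {..<p} (\<lambda>_. \<mu>)"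

definition coord_sigma :: "'b measure \<Rightarrow> nat \<Rightarrow> nat set \<Rightarrow> (nat \<Rightarrow> 'b) measure" where
  "coord_sigma \<mu> p J = sigma (space (prodlaw \<mu> p))
     {(\<lambda>x. x j) -` A \<inter> space (prodlaw \<mu> p) | j A. j \<in> J \<and> A \<in> sets \<mu>}"

definition T1s :: "(nat \<Rightarrow> (nat \<Rightarrow> 'b) \<Rightarrow> real) \<Rightarrow> (nat \<Rightarrow> 'a \<Rightarrow> 'b) \<Rightarrow> nat \<Rightarrow> 'a \<Rightarrow> real" where
  "T1s t X s \<omega> = t s (\<lambda>j\<in>{..<s}. X (Suc j) \<omega>)"

definition beta_c :: "'a measure \<Rightarrow> ('b \<Rightarrow> real) \<Rightarrow> (nat \<Rightarrow> 'a \<Rightarrow> 'b) \<Rightarrow> nat \<Rightarrow> real" where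
  "beta_c M l X n = real n * (\<integral>\<omega>. \<bar>l (X 1 \<omega>)\<bar> ^ 3 \<partial>M)"

definition gamma_s :: "'a measure \<Rightarrow> (nat \<Rightarrow> (nat \<Rightarrow> 'b) \<Rightarrow> real) \<Rightarrow> (nat \<Rightarrow> 'a \<Rightarrow> 'b) \<Rightarrow> nat \<Rightarrow> nat \<Rightarrow> ennreal" where
  "gamma_s M t X n s = of_nat (n choose s) * (\<integral>\<^sup>+\<omega>. ennreal ((T1s t X s \<omega>)\<^sup>2) \<partial>M)"

definition gamma_c :: "'a measure \<Rightarrow> (nat \<Rightarrow> (nat \<Rightarrow> 'b) \<Rightarrow> real) \<Rightarrow> (nat \<Rightarrow> 'a \<Rightarrow> 'b) \<Rightarrow> nat \<Rightarrow> nat \<Rightarrow> ennreal" where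
  "gamma_c M t X n k = (\<Sum>s\<in>{1..k}. gamma_s M t X n s)"

definition gamma_alpha_s :: "real \<Rightarrow> 'a measure \<Rightarrow> (nat \<Rightarrow> (nat \<Rightarrow> 'b) \<Rightarrow> real) \<Rightarrow> (nat \<Rightarrow> 'a \<Rightarrow> 'b) \<Rightarrow> nat \<Rightarrow> nat \<Rightarrow> ennreal" where
  "gamma_alpha_s \<alpha> M t X n s = of_nat (n choose s) * (\<integral>\<^sup>+\<omega>. ennreal (\<bar>T1s t X s \<omega>\<bar> powr \<alpha>) \<partial>M)"

definition gamma_alpha :: "real \<Rightarrow> 'a measure \<Rightarrow> (nat \<Rightarrow> (nat \<Rightarrow> 'b) \<Rightarrow> real) \<Rightarrow> (nat \<Rightarrow> 'a \<Rightarrow> 'b) \<Rightarrow> nat \<Rightarrow> nat \<Rightarrow> ennreal" where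
  "gamma_alpha \<alpha> M t X n k = (\<Sum>s\<in>{1..k}. gamma_alpha_s \<alpha> M t X n s)"

definition kappa_s :: "'a measure \<Rightarrow> ('b \<Rightarrow> real) \<Rightarrow> (nat \<Rightarrow> (nat \<Rightarrow> 'b) \<Rightarrow> real) \<Rightarrow> (nat \<Rightarrow> 'a \<Rightarrow> 'b) \<Rightarrow> nat \<Rightarrow> nat \<Rightarrow> real" where
  "kappa_s M l t X n s = real (n choose s) * (\<integral>\<omega>. (\<Prod>j\<in>{1..s}. l (X j \<omega>)) * T1s t X s \<omega> \<partial>M)"

end

theory Submission imports Defs begin

lemma abs_int_le_nn:
  fixes f :: "'a \<Rightarrow> real"
  shows "ennreal \<bar>integral\<^sup>L M f\<bar> \<le> (\<integral>\<^sup>+x. ennreal \<bar>f x\<bar> \<partial>M)"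
proof (cases "integrable M f")
  case True
  then show ?thesis using integral_norm_bound_ennreal[OF True] by simp
next
  case False
  then show ?thesis by (simp add: not_integrable_integral_eq)
qed

lemma young_a:
  fixes x c :: real assumes "x \<ge> 0" "c > 0"
  shows "x^2 \<le> (2/3) * c * x^3 + 1 / (3 * c^2)"
proof -
  define y where "y = c * x"
  have y0: "y \<ge> 0" using assms by (simp add: y_def)
  have "3*y^2 \<le> 2*y^3 + 1"
  proof -
    have "2*y^3 + 1 - 3*y^2 = (y-1)^2*(2*y+1)" by (simp add: power2_eq_square power3_eq_cube algebra_simps)
    also have "\<dots> \<ge> 0" using y0 by simp
    finally show ?thesis by simp
  qed
  then have "3*c^2*x^2 \<le> 2*c^3*x^3 + 1" by (simp add: y_def power_mult_distrib)
  then show ?thesis using assms by (simp add: field_simps power2_eq_square power3_eq_cube)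
qed

lemma young_b:
  fixes x B K q :: real assumes "x > 0" "B > 0" "K > 0" "2 \<le> q" "q \<le> 3"
  shows "x powr q * (K / B powr (q-2)) \<le> (3-q)*(K*x^2) + (q-2)*((K/B)*x^3)"
proof -
  have "(K*x^2) powr (3-q) * ((K/B)*x^3) powr (q-2) \<le> (3-q)*(K*x^2) + (q-2)*((K/B)*x^3)"
    by (rule Youngs_inequality_0) (use assms in auto)
  moreover have "(K*x^2) powr (3-q) * ((K/B)*x^3) powr (q-2) = x powr q * (K / B powr (q-2))"
  proof -
    have "(K*x^2) powr (3-q) * ((K/B)*x^3) powr (q-2)
       = K powr (3-q) * (x powr 2) powr (3-q) * (K powr (q-2) / B powr (q-2)) * (x powr 3) powr (q-2)"
      using assms by (simp add: powr_mult powr_divide powr_realpow)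
    also have "\<dots> = (K powr (3-q) * K powr (q-2)) * (x powr (2*(3-q)) * x powr (3*(q-2))) / B powr (q-2)"
      by (simp add: powr_powr)
    also have "\<dots> = K * x powr q / B powr (q-2)"
      using assms by (simp add: powr_add[symmetric] algebra_simps)
    finally show ?thesis by simp
  qed
  ultimately show ?thesis by simp
qed

lemma young_d:
  fixes a b p q :: real assumes "p>1" "q>1" "1/p + 1/q = 1" "a\<ge>0" "b\<ge>0"
  shows "a * b \<le> a powr p + b powr q"
proof -
  have "a * b \<le> a powr p / p + b powr q / q" by (rule Youngs_inequality) (use assms in auto)
  also have "a powr p / p \<le> a powr p" using assms mult_left_mono[of 1 p "a powr p"] by (simp add: divide_le_eq)
  also have "b powr q / q \<le> b powr q" using assms mult_left_mono[of 1 q "b powr q"] by (simp add: divide_le_eq)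
  finally show ?thesis by simp
qed

lemma powr_bound23:
  fixes x q :: real assumes "2 \<le> q" "q \<le> 3"
  shows "\<bar>x\<bar> powr q \<le> x^2 + \<bar>x\<bar>^3"
proof (cases "\<bar>x\<bar> \<le> 1")
  case True
  have "\<bar>x\<bar> powr q \<le> \<bar>x\<bar> powr 2" by (rule powr_mono') (use assms True in auto)
  also have "\<dots> = x^2" by (cases "x = 0") (auto simp: powr_realpow)
  finally have "\<bar>x\<bar> powr q \<le> x^2" .
  moreover have "0 \<le> \<bar>x\<bar>^3" by simp
  ultimately show ?thesis by linarith
next
  case False
  have "\<bar>x\<bar> powr q \<le> \<bar>x\<bar> powr 3" by (rule powr_mono) (use assms False in auto)
  also have "\<dots> = \<bar>x\<bar>^3" using False by (simp add: powr_realpow)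
  finally have "\<bar>x\<bar> powr q \<le> \<bar>x\<bar>^3" .
  moreover have "0 \<le> x^2" by simp
  ultimately show ?thesis by linarith
qed

locale LS = prob_space M for M :: "'a measure" +
  fixes N :: "'b measure" and X :: "nat \<Rightarrow> 'a \<Rightarrow> 'b" and l :: "'b \<Rightarrow> real" and n :: nat
  assumes n1: "n \<ge> 1"
    and Xmeas: "\<forall>i\<in>{1..n}. X i \<in> measurable M N"
    and Xindep: "indep_vars (\<lambda>_. N) X {1..n}"
    and Xid: "\<forall>i\<in>{1..n}. distr M N (X i) = distr M N (X 1)"
    and lmeas: "l \<in> borel_measurable N"
    and L2_int: "integrable M (\<lambda>\<omega>. (l (X 1 \<omega>))\<^sup>2)"
    and L2: "real n * (\<integral>\<omega>. (l (X 1 \<omega>))\<^sup>2 \<partial>M) = 1"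
    and beta_fin: "integrable M (\<lambda>\<omega>. \<bar>l (X 1 \<omega>)\<bar> ^ 3)"
begin

lemma LX_meas: "j \<in> {1..n} \<Longrightarrow> (\<lambda>\<omega>. l (X j \<omega>)) \<in> borel_measurable M"
  using Xmeas lmeas by (auto intro: measurable_compose)

lemma L1_meas[measurable]: "(\<lambda>\<omega>. l (X 1 \<omega>)) \<in> borel_measurable M"
  using LX_meas n1 by auto

lemma prod_nn:
  assumes g: "g \<in> borel_measurable borel" "\<And>x. 0 \<le> g x" and s: "s \<le> n"
  shows "(\<integral>\<^sup>+\<omega>. ennreal (\<Prod>j\<in>{1..s}. g (l (X j \<omega>))) \<partial>M)
       = (\<integral>\<^sup>+\<omega>. ennreal (g (l (X 1 \<omega>))) \<partial>M) ^ s"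
proof -
  have gm: "(\<lambda>x. ennreal (g (l x))) \<in> borel_measurable N"
    by (rule measurable_compose[OF measurable_compose[OF lmeas g(1)] measurable_ennreal])
  have ind: "indep_vars (\<lambda>_. borel) (\<lambda>j \<omega>. ennreal (g (l (X j \<omega>)))) {1..s}"
  proof (rule indep_vars_compose2[where Y="\<lambda>i x. ennreal (g (l x))" and N="\<lambda>_. borel",
        OF indep_vars_subset[OF Xindep]])
    show "{1..s} \<subseteq> {1..n}" using s by auto
  qed (rule gm)
  have "(\<integral>\<^sup>+\<omega>. ennreal (\<Prod>j\<in>{1..s}. g (l (X j \<omega>))) \<partial>M)
      = (\<integral>\<^sup>+\<omega>. (\<Prod>j\<in>{1..s}. ennreal (g (l (X j \<omega>)))) \<partial>M)"
    using g by (simp add: prod_ennreal)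
  also have "\<dots> = (\<Prod>j\<in>{1..s}. \<integral>\<^sup>+\<omega>. ennreal (g (l (X j \<omega>))) \<partial>M)"
    by (rule indep_vars_nn_integral[OF _ ind]) auto
  also have "\<dots> = (\<Prod>j\<in>{1..s}. \<integral>\<^sup>+\<omega>. ennreal (g (l (X 1 \<omega>))) \<partial>M)"
  proof (rule prod.cong)
    fix j assume j: "j \<in> {1..s}"
    then have jn: "j \<in> {1..n}" "1 \<in> {1..n}" using s by auto
    have "(\<integral>\<^sup>+\<omega>. ennreal (g (l (X j \<omega>))) \<partial>M) = (\<integral>\<^sup>+x. ennreal (g (l x)) \<partial>distr M N (X j))"
      using jn Xmeas gm by (subst nn_integral_distr) auto
    also have "\<dots> = (\<integral>\<^sup>+x. ennreal (g (l x)) \<partial>distr M N (X 1))"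
    proof -
      have "distr M N (X j) = distr M N (X 1)" using jn Xid by blast
      then show ?thesis by (simp only:)
    qed
    also have "\<dots> = (\<integral>\<^sup>+\<omega>. ennreal (g (l (X 1 \<omega>))) \<partial>M)"
      using jn Xmeas gm by (subst nn_integral_distr) auto
    finally show "(\<integral>\<^sup>+\<omega>. ennreal (g (l (X j \<omega>))) \<partial>M) = (\<integral>\<^sup>+\<omega>. ennreal (g (l (X 1 \<omega>))) \<partial>M)" .
  qed simp
  also have "\<dots> = (\<integral>\<^sup>+\<omega>. ennreal (g (l (X 1 \<omega>))) \<partial>M) ^ s" by simp
  finally show ?thesis .
qed

lemma powr_int:
  assumes "2 \<le> q" "q \<le> 3"
  shows "integrable M (\<lambda>\<omega>. \<bar>l (X 1 \<omega>)\<bar> powr q)"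
proof -
  have i: "integrable M (\<lambda>\<omega>. (l (X 1 \<omega>))\<^sup>2 + \<bar>l (X 1 \<omega>)\<bar> ^ 3)"
    using L2_int beta_fin by auto
  show ?thesis
  proof (rule Bochner_Integration.integrable_bound[OF i])
    show "(\<lambda>\<omega>. \<bar>l (X 1 \<omega>)\<bar> powr q) \<in> borel_measurable M" by measurable
  qed (use powr_bound23[OF assms] in auto)
qed

lemma part_a: "1 \<le> sqrt (real n) * (real n * (\<integral>\<omega>. \<bar>l (X 1 \<omega>)\<bar> ^ 3 \<partial>M))"
proof -
  define c where "c = sqrt (real n)"
  have c0: "c > 0" and cc: "c^2 = real n" using n1 by (auto simp: c_def)
  have "(\<integral>\<omega>. (l (X 1 \<omega>))\<^sup>2 \<partial>M) \<le> (\<integral>\<omega>. (2/3) * c * \<bar>l (X 1 \<omega>)\<bar> ^ 3 + 1 / (3 * c^2) \<partial>M)"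
  proof (rule integral_mono)
    fix \<omega> show "(l (X 1 \<omega>))\<^sup>2 \<le> (2/3) * c * \<bar>l (X 1 \<omega>)\<bar> ^ 3 + 1 / (3 * c^2)"
      using young_a[of "\<bar>l (X 1 \<omega>)\<bar>" c] c0 by simp
  qed (use L2_int beta_fin in auto)
  also have "\<dots> = (2/3) * c * (\<integral>\<omega>. \<bar>l (X 1 \<omega>)\<bar> ^ 3 \<partial>M) + 1 / (3 * c^2)"
    using beta_fin by (simp add: prob_space)
  finally have "1 / real n \<le> (2/3) * c * (\<integral>\<omega>. \<bar>l (X 1 \<omega>)\<bar> ^ 3 \<partial>M) + 1 / (3 * real n)"
    using L2 n1 cc by (simp add: field_simps)
  then have "1 \<le> (2/3) * c * (real n * (\<integral>\<omega>. \<bar>l (X 1 \<omega>)\<bar> ^ 3 \<partial>M)) + 1/3"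
    using n1 by (simp add: field_simps)
  then show ?thesis by (simp add: c_def)
qed

definition "bet = real n * (\<integral>\<omega>. \<bar>l (X 1 \<omega>)\<bar> ^ 3 \<partial>M)"

lemma bet_pos: "bet > 0"
proof -
  have "0 \<le> sqrt (real n)" by simp
  then show ?thesis using part_a unfolding bet_def
    by (metis less_numeral_extra(1) mult_not_zero not_less order_less_le_trans zero_less_mult_iff)
qed

lemma part_b:
  assumes q: "2 \<le> q" "q \<le> 3"
  shows "real n * (\<integral>\<omega>. \<bar>l (X 1 \<omega>)\<bar> powr q \<partial>M) \<le> bet powr (q - 2)"
proof -
  define K where "K = real n"
  have K0: "K > 0" using n1 by (simp add: K_def)
  have pt: "\<bar>l (X 1 \<omega>)\<bar> powr q * (K / bet powr (q-2))
     \<le> (3-q)*(K*(l (X 1 \<omega>))^2) + (q-2)*((K/bet)*\<bar>l (X 1 \<omega>)\<bar>^3)" for \<omega>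
  proof (cases "l (X 1 \<omega>) = 0")
    case True then show ?thesis using q by simp
  next
    case False
    then show ?thesis using young_b[of "\<bar>l (X 1 \<omega>)\<bar>" bet K q] bet_pos K0 q by simp
  qed
  have "(\<integral>\<omega>. \<bar>l (X 1 \<omega>)\<bar> powr q * (K / bet powr (q-2)) \<partial>M)
     \<le> (\<integral>\<omega>. (3-q)*(K*(l (X 1 \<omega>))^2) + (q-2)*((K/bet)*\<bar>l (X 1 \<omega>)\<bar>^3) \<partial>M)"
    by (rule integral_mono) (use powr_int[OF q] L2_int beta_fin pt in auto)
  also have "\<dots> = (3-q)*(K*(\<integral>\<omega>. (l (X 1 \<omega>))^2 \<partial>M)) + (q-2)*((K/bet)*(\<integral>\<omega>. \<bar>l (X 1 \<omega>)\<bar>^3 \<partial>M))"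
    using L2_int beta_fin by simp
  also have "\<dots> = 1"
  proof -
    have a: "K*(\<integral>\<omega>. (l (X 1 \<omega>))^2 \<partial>M) = 1" using L2 by (simp add: K_def)
    have b: "(K/bet)*(\<integral>\<omega>. \<bar>l (X 1 \<omega>)\<bar>^3 \<partial>M) = 1"
    proof -
      have "(\<integral>\<omega>. \<bar>l (X 1 \<omega>)\<bar>^3 \<partial>M) \<noteq> 0" using bet_pos unfolding bet_def by auto
      then show ?thesis using n1 unfolding K_def bet_def by (simp add: field_simps)
    qed
    show ?thesis unfolding a b by simp
  qed
  finally have "(\<integral>\<omega>. \<bar>l (X 1 \<omega>)\<bar> powr q \<partial>M) * (K / bet powr (q-2)) \<le> 1" by simp
  then show ?thesis using bet_pos unfolding K_def by (simp add: field_simps)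
qed


lemma P_meas:
  assumes "s \<le> n"
  shows "(\<lambda>\<omega>. \<Prod>j\<in>{1..s}. l (X j \<omega>)) \<in> borel_measurable M"
proof (rule borel_measurable_prod)
  fix j assume "j \<in> {1..s}"
  then have "j \<in> {1..n}" using assms by auto
  then show "(\<lambda>\<omega>. l (X j \<omega>)) \<in> borel_measurable M" by (rule LX_meas)
qed

lemma kappa_c:
  assumes s: "s \<le> n" and Tm: "T \<in> borel_measurable M"
  shows "(ennreal (real (n choose s) * \<bar>\<integral>\<omega>. (\<Prod>j\<in>{1..s}. l (X j \<omega>)) * T \<omega> \<partial>M\<bar>))^2
     \<le> ennreal (real (n choose s)) * (\<integral>\<^sup>+\<omega>. ennreal ((T \<omega>)\<^sup>2) \<partial>M)"
proof -
  define C where "C = real (n choose s)"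
  define P where "P = (\<lambda>\<omega>. \<Prod>j\<in>{1..s}. l (X j \<omega>))"
  note Pm[measurable] = P_meas[OF s, folded P_def]
  note Tm[measurable]
  define E where "E = (\<integral>\<^sup>+\<omega>. ennreal ((T \<omega>)\<^sup>2) \<partial>M)"
  have C0: "C \<ge> 0" by (simp add: C_def)
  have Cle: "C \<le> real n ^ s" unfolding C_def
    using binomial_le_pow[OF s] by (metis of_nat_le_iff of_nat_power)
  have "ennreal \<bar>\<integral>\<omega>. P \<omega> * T \<omega> \<partial>M\<bar> \<le> (\<integral>\<^sup>+\<omega>. ennreal \<bar>P \<omega> * T \<omega>\<bar> \<partial>M)"
    by (rule abs_int_le_nn)
  also have "\<dots> = (\<integral>\<^sup>+\<omega>. ennreal \<bar>P \<omega>\<bar> * ennreal \<bar>T \<omega>\<bar> \<partial>M)"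
    by (simp add: abs_mult ennreal_mult)
  finally have 1: "ennreal \<bar>\<integral>\<omega>. P \<omega> * T \<omega> \<partial>M\<bar> \<le> (\<integral>\<^sup>+\<omega>. ennreal \<bar>P \<omega>\<bar> * ennreal \<bar>T \<omega>\<bar> \<partial>M)" .
  have CS: "(\<integral>\<^sup>+\<omega>. ennreal \<bar>P \<omega>\<bar> * ennreal \<bar>T \<omega>\<bar> \<partial>M)^2
      \<le> (\<integral>\<^sup>+\<omega>. ennreal \<bar>P \<omega>\<bar> ^ 2 \<partial>M) * (\<integral>\<^sup>+\<omega>. ennreal \<bar>T \<omega>\<bar> ^ 2 \<partial>M)"
    by (rule Cauchy_Schwarz_nn_integral) measurable
  have "(\<integral>\<^sup>+\<omega>. ennreal \<bar>P \<omega>\<bar> ^ 2 \<partial>M) = (\<integral>\<^sup>+\<omega>. ennreal (\<Prod>j\<in>{1..s}. (l (X j \<omega>))^2) \<partial>M)"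
    by (simp add: P_def ennreal_power power2_abs prod_power_distrib)
  also have "\<dots> = (\<integral>\<^sup>+\<omega>. ennreal ((l (X 1 \<omega>))^2) \<partial>M) ^ s"
    by (rule prod_nn[where g="\<lambda>x. x^2", OF _ _ s]) auto
  also have "(\<integral>\<^sup>+\<omega>. ennreal ((l (X 1 \<omega>))^2) \<partial>M) = ennreal (1 / real n)"
  proof -
    have "(\<integral>\<^sup>+\<omega>. ennreal ((l (X 1 \<omega>))^2) \<partial>M) = ennreal (\<integral>\<omega>. (l (X 1 \<omega>))^2 \<partial>M)"
      by (rule nn_integral_eq_integral) (use L2_int in auto)
    also have "(\<integral>\<omega>. (l (X 1 \<omega>))^2 \<partial>M) = 1 / real n" using L2 n1 by (simp add: field_simps)
    finally show ?thesis .
  qed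
  finally have P2: "(\<integral>\<^sup>+\<omega>. ennreal \<bar>P \<omega>\<bar> ^ 2 \<partial>M) = ennreal ((1 / real n) ^ s)"
    by (simp add: ennreal_power)
  have T2: "(\<integral>\<^sup>+\<omega>. ennreal \<bar>T \<omega>\<bar> ^ 2 \<partial>M) = E"
    by (simp add: E_def ennreal_power power2_abs)
  have "(ennreal (C * \<bar>\<integral>\<omega>. P \<omega> * T \<omega> \<partial>M\<bar>))^2 = ennreal (C^2) * (ennreal \<bar>\<integral>\<omega>. P \<omega> * T \<omega> \<partial>M\<bar>)^2"
    using C0 by (simp add: ennreal_mult ennreal_power power_mult_distrib)
  also have "\<dots> \<le> ennreal (C^2) * (\<integral>\<^sup>+\<omega>. ennreal \<bar>P \<omega>\<bar> * ennreal \<bar>T \<omega>\<bar> \<partial>M)^2"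
    by (intro mult_left_mono power_mono 1) auto
  also have "\<dots> \<le> ennreal (C^2) * (ennreal ((1 / real n) ^ s) * E)"
    using CS P2 T2 by (intro mult_left_mono) auto
  also have "\<dots> = ennreal (C^2 * (1 / real n) ^ s) * E"
    using C0 by (simp add: ennreal_mult mult.assoc)
  also have "\<dots> \<le> ennreal C * E"
  proof (intro mult_right_mono ennreal_leI)
    have "C^2 * (1 / real n) ^ s = C * (C / real n ^ s)" by (simp add: power2_eq_square power_one_over)
    also have "\<dots> \<le> C * 1"
      using C0 Cle n1 by (intro mult_left_mono) (auto simp: divide_le_eq)
    finally show "C^2 * (1 / real n) ^ s \<le> C" by simp
  qed auto
  finally show ?thesis unfolding C_def P_def E_def .
qed

lemma kappa_d:
  assumes s: "s \<le> n" and Tm: "T \<in> borel_measurable M" and a: "3/2 < \<alpha>" "\<alpha> < 2"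
  shows "ennreal (real (n choose s) * \<bar>\<integral>\<omega>. (\<Prod>j\<in>{1..s}. l (X j \<omega>)) * T \<omega> \<partial>M\<bar>)
     \<le> ennreal (bet powr (((2 - \<alpha>) / (\<alpha> - 1)) * real s))
       + ennreal (real (n choose s)) * (\<integral>\<^sup>+\<omega>. ennreal (\<bar>T \<omega>\<bar> powr \<alpha>) \<partial>M)"
proof -
  define C where "C = real (n choose s)"
  define P where "P = (\<lambda>\<omega>. \<Prod>j\<in>{1..s}. l (X j \<omega>))"
  note Pm[measurable] = P_meas[OF s, folded P_def]
  note Tm[measurable]
  define p where "p = \<alpha> / (\<alpha> - 1)"
  have p1: "p > 1" and p2: "2 \<le> p" "p \<le> 3" and conj: "1/p + 1/\<alpha> = 1"
    and dl: "(2 - \<alpha>) / (\<alpha> - 1) = p - 2"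
    using a by (auto simp: p_def field_simps)
  have C0: "C \<ge> 0" by (simp add: C_def)
  have Cle: "C \<le> real n ^ s" unfolding C_def
    using binomial_le_pow[OF s] by (metis of_nat_le_iff of_nat_power)
  define m where "m = (\<integral>\<omega>. \<bar>l (X 1 \<omega>)\<bar> powr p \<partial>M)"
  have m0: "m \<ge> 0" by (simp add: m_def)
  have "ennreal \<bar>\<integral>\<omega>. P \<omega> * T \<omega> \<partial>M\<bar> \<le> (\<integral>\<^sup>+\<omega>. ennreal \<bar>P \<omega> * T \<omega>\<bar> \<partial>M)"
    by (rule abs_int_le_nn)
  also have "\<dots> \<le> (\<integral>\<^sup>+\<omega>. ennreal (\<bar>P \<omega>\<bar> powr p) + ennreal (\<bar>T \<omega>\<bar> powr \<alpha>) \<partial>M)"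
  proof (rule nn_integral_mono)
    fix \<omega>
    have "\<bar>P \<omega> * T \<omega>\<bar> \<le> \<bar>P \<omega>\<bar> powr p + \<bar>T \<omega>\<bar> powr \<alpha>"
      unfolding abs_mult by (rule young_d) (use p1 a conj in auto)
    then show "ennreal \<bar>P \<omega> * T \<omega>\<bar> \<le> ennreal (\<bar>P \<omega>\<bar> powr p) + ennreal (\<bar>T \<omega>\<bar> powr \<alpha>)"
      by (simp add: ennreal_plus[symmetric] del: ennreal_plus)
  qed
  also have "\<dots> = (\<integral>\<^sup>+\<omega>. ennreal (\<bar>P \<omega>\<bar> powr p) \<partial>M) + (\<integral>\<^sup>+\<omega>. ennreal (\<bar>T \<omega>\<bar> powr \<alpha>) \<partial>M)"
    by (rule nn_integral_add) measurable
  also have "(\<integral>\<^sup>+\<omega>. ennreal (\<bar>P \<omega>\<bar> powr p) \<partial>M) = ennreal (m ^ s)"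
  proof -
    have "(\<integral>\<^sup>+\<omega>. ennreal (\<bar>P \<omega>\<bar> powr p) \<partial>M) = (\<integral>\<^sup>+\<omega>. ennreal (\<Prod>j\<in>{1..s}. \<bar>l (X j \<omega>)\<bar> powr p) \<partial>M)"
      by (simp add: P_def abs_prod prod_powr_distrib)
    also have "\<dots> = (\<integral>\<^sup>+\<omega>. ennreal (\<bar>l (X 1 \<omega>)\<bar> powr p) \<partial>M) ^ s"
      by (rule prod_nn[where g="\<lambda>x. \<bar>x\<bar> powr p", OF _ _ s]) auto
    also have "(\<integral>\<^sup>+\<omega>. ennreal (\<bar>l (X 1 \<omega>)\<bar> powr p) \<partial>M) = ennreal m"
      unfolding m_def by (rule nn_integral_eq_integral) (use powr_int[OF p2] in auto)
    finally show ?thesis by (simp add: ennreal_power m0)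
  qed
  finally have 1: "ennreal \<bar>\<integral>\<omega>. P \<omega> * T \<omega> \<partial>M\<bar>
      \<le> ennreal (m ^ s) + (\<integral>\<^sup>+\<omega>. ennreal (\<bar>T \<omega>\<bar> powr \<alpha>) \<partial>M)" .
  have key: "C * m ^ s \<le> bet powr ((p - 2) * real s)"
  proof -
    have "C * m ^ s \<le> real n ^ s * m ^ s" using Cle m0 by (intro mult_right_mono) auto
    also have "\<dots> = (real n * m) ^ s" by (simp add: power_mult_distrib)
    also have "\<dots> \<le> (bet powr (p - 2)) ^ s"
      using part_b[OF p2] m0 unfolding m_def by (intro power_mono) auto
    also have "\<dots> = bet powr ((p - 2) * real s)"
      using bet_pos by (simp add: powr_power mult.commute)
    finally show ?thesis .
  qed
  have "ennreal (C * \<bar>\<integral>\<omega>. P \<omega> * T \<omega> \<partial>M\<bar>) = ennreal C * ennreal \<bar>\<integral>\<omega>. P \<omega> * T \<omega> \<partial>M\<bar>"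
    using C0 by (simp add: ennreal_mult)
  also have "\<dots> \<le> ennreal C * (ennreal (m ^ s) + (\<integral>\<^sup>+\<omega>. ennreal (\<bar>T \<omega>\<bar> powr \<alpha>) \<partial>M))"
    by (intro mult_left_mono 1) auto
  also have "\<dots> = ennreal (C * m ^ s) + ennreal C * (\<integral>\<^sup>+\<omega>. ennreal (\<bar>T \<omega>\<bar> powr \<alpha>) \<partial>M)"
    using C0 m0 by (simp add: distrib_left ennreal_mult)
  also have "\<dots> \<le> ennreal (bet powr ((p - 2) * real s)) + ennreal C * (\<integral>\<^sup>+\<omega>. ennreal (\<bar>T \<omega>\<bar> powr \<alpha>) \<partial>M)"
    using key by (intro add_right_mono ennreal_leI)
  finally show ?thesis unfolding C_def P_def dl .
qed
end


theorem lemma1: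
  fixes M :: "'a measure" and N :: "'b measure"
    and X :: "nat \<Rightarrow> 'a \<Rightarrow> 'b" and l :: "'b \<Rightarrow> real"
    and t :: "nat \<Rightarrow> (nat \<Rightarrow> 'b) \<Rightarrow> real" and n k :: nat
  assumes P: "prob_space M"
    and k: "k \<ge> 1" and n: "n \<ge> 1"
    and Xmeas: "\<forall>i\<in>{1..n}. X i \<in> measurable M N"
    and Xindep: "prob_space.indep_vars M (\<lambda>_. N) X {1..n}"
    and Xid: "\<forall>i\<in>{1..n}. distr M N (X i) = distr M N (X 1)"
    and lmeas: "l \<in> borel_measurable N"
    and L_int: "integrable M (\<lambda>\<omega>. l (X 1 \<omega>))"
    and L_mean: "(\<integral>\<omega>. l (X 1 \<omega>) \<partial>M) = 0"
    and L2_int: "integrable M (\<lambda>\<omega>. (l (X 1 \<omega>))\<^sup>2)"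
    and L2: "real n * (\<integral>\<omega>. (l (X 1 \<omega>))\<^sup>2 \<partial>M) = 1"
    and tmeas: "\<forall>p\<in>{1..k}. t p \<in> borel_measurable (PiM {..<p} (\<lambda>_. N))"
    and tsym: "\<forall>p\<in>{1..k}. \<forall>x\<in>space (PiM {..<p} (\<lambda>_. N)). \<forall>\<pi>.
                 \<pi> permutes {..<p} \<longrightarrow> t p (x \<circ> \<pi>) = t p x"
    and tint: "\<forall>p\<in>{1..k}. integrable (prodlaw (distr M N (X 1)) p) (t p)"
    and tdeg: "\<forall>p\<in>{1..k}. AE x in prodlaw (distr M N (X 1)) p.
                 real_cond_exp (prodlaw (distr M N (X 1)) p)
                   (coord_sigma (distr M N (X 1)) p {1..<p}) (t p) x = 0"
    and beta_fin: "integrable M (\<lambda>\<omega>. \<bar>l (X 1 \<omega>)\<bar> ^ 3)"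
  shows "1 \<le> sqrt (real n) * beta_c M l X n
    \<and> (\<forall>q::real. 2 \<le> q \<and> q \<le> 3 \<longrightarrow>
         real n * (\<integral>\<omega>. \<bar>l (X 1 \<omega>)\<bar> powr q \<partial>M) \<le> beta_c M l X n powr (q - 2))
    \<and> (gamma_c M t X n k < \<infinity> \<longrightarrow>
         (\<forall>s\<in>{1..k}. \<bar>kappa_s M l t X n s\<bar> \<le> sqrt (enn2real (gamma_s M t X n s))
                    \<and> sqrt (enn2real (gamma_s M t X n s)) \<le> sqrt (enn2real (gamma_c M t X n k))))
    \<and> (\<forall>(\<alpha>::real) (s::nat). 3/2 < \<alpha> \<and> \<alpha> < 2 \<and> 1 \<le> s
         \<and> real s < min (1 / ((2 - \<alpha>) / (\<alpha> - 1))) (real k) \<longrightarrow>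
         ennreal \<bar>kappa_s M l t X n s\<bar>
           \<le> ennreal (beta_c M l X n powr (((2 - \<alpha>) / (\<alpha> - 1)) * real s)) + gamma_alpha_s \<alpha> M t X n s
         \<and> ennreal (beta_c M l X n powr (((2 - \<alpha>) / (\<alpha> - 1)) * real s)) + gamma_alpha_s \<alpha> M t X n s
           \<le> ennreal (beta_c M l X n powr (((2 - \<alpha>) / (\<alpha> - 1)) * real s)) + gamma_alpha \<alpha> M t X n k)"
proof -
  interpret LS M N X l n
  proof (rule LS.intro[OF P], rule LS_axioms.intro)
  qed (fact n Xmeas Xindep Xid lmeas L2_int L2 beta_fin)+
  have bc: "beta_c M l X n = bet" by (simp add: beta_c_def bet_def)
  have Tm: "T1s t X s \<in> borel_measurable M" if s: "s \<in> {1..k}" "s \<le> n" for s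
  proof -
    have inner: "(\<lambda>\<omega>. \<lambda>j\<in>{..<s}. X (Suc j) \<omega>) \<in> measurable M (PiM {..<s} (\<lambda>_. N))"
    proof (rule measurable_restrict)
      fix j assume "j \<in> {..<s}"
      then have "Suc j \<in> {1..n}" using s by auto
      then show "X (Suc j) \<in> measurable M N" using Xmeas by blast
    qed
    have "t s \<in> borel_measurable (PiM {..<s} (\<lambda>_. N))" using tmeas s by blast
    from measurable_compose[OF inner this] show ?thesis
      unfolding T1s_def[abs_def] by simp
  qed
  have kap: "kappa_s M l t X n s = real (n choose s) * (\<integral>\<omega>. (\<Prod>j\<in>{1..s}. l (X j \<omega>)) * T1s t X s \<omega> \<partial>M)" for s
    by (simp add: kappa_s_def)
  have kap_abs: "\<bar>kappa_s M l t X n s\<bar> = real (n choose s) * \<bar>\<integral>\<omega>. (\<Prod>j\<in>{1..s}. l (X j \<omega>)) * T1s t X s \<omega> \<partial>M\<bar>" for s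
    unfolding kap by (simp add: abs_mult)
  have kap0: "kappa_s M l t X n s = 0" if "\<not> s \<le> n" for s
    using that by (simp add: kappa_s_def)
  have gs_le: "gamma_s M t X n s \<le> gamma_c M t X n k" if "s \<in> {1..k}" for s
    unfolding gamma_c_def by (rule member_le_sum) (use that in auto)
  have gas_le: "gamma_alpha_s \<alpha> M t X n s \<le> gamma_alpha \<alpha> M t X n k" if "s \<in> {1..k}" for s \<alpha>
    unfolding gamma_alpha_def by (rule member_le_sum) (use that in auto)
  have A: "1 \<le> sqrt (real n) * beta_c M l X n"
    using part_a by (simp add: bc bet_def)
  have B: "\<forall>q::real. 2 \<le> q \<and> q \<le> 3 \<longrightarrow>
         real n * (\<integral>\<omega>. \<bar>l (X 1 \<omega>)\<bar> powr q \<partial>M) \<le> beta_c M l X n powr (q - 2)"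
    using part_b by (simp add: bc)
  have C: "gamma_c M t X n k < \<infinity> \<longrightarrow>
         (\<forall>s\<in>{1..k}. \<bar>kappa_s M l t X n s\<bar> \<le> sqrt (enn2real (gamma_s M t X n s))
                    \<and> sqrt (enn2real (gamma_s M t X n s)) \<le> sqrt (enn2real (gamma_c M t X n k)))"
  proof (intro impI ballI conjI)
    fix s assume fin: "gamma_c M t X n k < \<infinity>" and s: "s \<in> {1..k}"
    have gsfin: "gamma_s M t X n s < top" using gs_le[OF s] fin by (simp add: le_less_trans)
    show "sqrt (enn2real (gamma_s M t X n s)) \<le> sqrt (enn2real (gamma_c M t X n k))"
      using enn2real_mono[OF gs_le[OF s]] fin by simp
    show "\<bar>kappa_s M l t X n s\<bar> \<le> sqrt (enn2real (gamma_s M t X n s))"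
    proof (cases "s \<le> n")
      case False then show ?thesis using kap0 by simp
    next
      case True
      have "(ennreal \<bar>kappa_s M l t X n s\<bar>)^2 \<le> gamma_s M t X n s"
        unfolding kap_abs gamma_s_def ennreal_of_nat_eq_real_of_nat
        by (rule kappa_c[OF True Tm[OF s True]])
      also have "\<dots> = ennreal (enn2real (gamma_s M t X n s))" using gsfin by simp
      finally have "ennreal (\<bar>kappa_s M l t X n s\<bar>^2) \<le> ennreal (enn2real (gamma_s M t X n s))"
        by (simp add: ennreal_power)
      then have "\<bar>kappa_s M l t X n s\<bar>^2 \<le> enn2real (gamma_s M t X n s)"
        by (subst (asm) ennreal_le_iff) auto
      then show ?thesis by (rule real_le_rsqrt)
    qed
  qed
  have D: "\<forall>(\<alpha>::real) (s::nat). 3/2 < \<alpha> \<and> \<alpha> < 2 \<and> 1 \<le> s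
         \<and> real s < min (1 / ((2 - \<alpha>) / (\<alpha> - 1))) (real k) \<longrightarrow>
         ennreal \<bar>kappa_s M l t X n s\<bar>
           \<le> ennreal (beta_c M l X n powr (((2 - \<alpha>) / (\<alpha> - 1)) * real s)) + gamma_alpha_s \<alpha> M t X n s
         \<and> ennreal (beta_c M l X n powr (((2 - \<alpha>) / (\<alpha> - 1)) * real s)) + gamma_alpha_s \<alpha> M t X n s
           \<le> ennreal (beta_c M l X n powr (((2 - \<alpha>) / (\<alpha> - 1)) * real s)) + gamma_alpha \<alpha> M t X n k"
  proof (intro allI impI conjI)
    fix \<alpha> :: real and s :: nat
    assume h: "3/2 < \<alpha> \<and> \<alpha> < 2 \<and> 1 \<le> s \<and> real s < min (1 / ((2 - \<alpha>) / (\<alpha> - 1))) (real k)"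
    then have s: "s \<in> {1..k}" by auto
    show "ennreal (beta_c M l X n powr (((2 - \<alpha>) / (\<alpha> - 1)) * real s)) + gamma_alpha_s \<alpha> M t X n s
           \<le> ennreal (beta_c M l X n powr (((2 - \<alpha>) / (\<alpha> - 1)) * real s)) + gamma_alpha \<alpha> M t X n k"
      by (rule add_left_mono[OF gas_le[OF s]])
    show "ennreal \<bar>kappa_s M l t X n s\<bar>
           \<le> ennreal (beta_c M l X n powr (((2 - \<alpha>) / (\<alpha> - 1)) * real s)) + gamma_alpha_s \<alpha> M t X n s"
    proof (cases "s \<le> n")
      case False then show ?thesis using kap0 by simp
    next
      case True
      show ?thesis
        unfolding kap_abs gamma_alpha_s_def ennreal_of_nat_eq_real_of_nat bc
        by (rule kappa_d[OF True Tm[OF s True]]) (use h in auto)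
    qed
  qed
  show ?thesis using A B C D by blast
qed

end
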